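(* Let $\Gamma_M$ ($M>0$) be a family of nonatomic routing games with a single OD pair with demand $M$, sharing the same graph, path set and edge costs $(c_e)_{e\in\mathcal E}$, where each $c_e$ is a polynomial. Then $\mathrm{PoA}(\Gamma_M)\to 1$ as $M\to \infty$.
   Context: A nonatomic routing game with a single OD pair consists of a finite directed multigraph with edge set $\mathcal E$, a nonempty finite set $\mathcal P$ of paths from an origin to a destination, a demand $M>0$, and continuous nondecreasing edge costs $c_e:[0,\infty)\to[0,\infty)$. Feasible flows: $f\in\mathbb R_+^{\mathcal P}$ with $\sum_p f_p=M$; loads $x_e=\sum_{p\ni e}f_p$; path costs $c_p(f)=\sum_{e\in p}c_e(x_e)$. A Wardrop equilibrium is a feasible $f^*$ with $c_p(f^* )\le c_{p'}(f^* )$ whenever $f^*_p>0$. Social cost $L(x)=\sum_e x_ec_e(x_e)$; $\mathrm{Opt}$ is its minimum over feasible loads, $\mathrm{Eq}=L(x^* )$ at an equilibrium load, and $\mathrm{PoA}=\mathrm{Eq}/\mathrm{Opt}$; it is assumed that $\mathrm{Opt}>0$ (otherwise $\mathrm{PoA}:=1$). *)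

theory Defs
  imports "HOL-Analysis.Analysis" "HOL-Computational_Algebra.Polynomial"
begin

fun walk_from :: "('e \<Rightarrow> 'v) \<Rightarrow> ('e \<Rightarrow> 'v) \<Rightarrow> 'v \<Rightarrow> 'e list \<Rightarrow> 'v list" where
  "walk_from src tgt u [] = [u]"
| "walk_from src tgt u (e # es) = u # walk_from src tgt (tgt e) es"

definition is_od_path :: "('e \<Rightarrow> 'v) \<Rightarrow> ('e \<Rightarrow> 'v) \<Rightarrow> 'v \<Rightarrow> 'v \<Rightarrow> 'e list \<Rightarrow> bool" where
  "is_od_path src tgt orig dest p \<longleftrightarrow>
     p \<noteq> [] \<and>
     (\<forall>i < length p - 1. tgt (p ! i) = src (p ! (i+1))) \<and>
     src (p ! 0) = orig \<and> tgt (last p) = dest \<and>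
     distinct (walk_from src tgt orig p)"

definition feasible :: "'e list set \<Rightarrow> real \<Rightarrow> ('e list \<Rightarrow> real) \<Rightarrow> bool" where
  "feasible P M f \<longleftrightarrow> (\<forall>p\<in>P. f p \<ge> 0) \<and> (\<Sum>p\<in>P. f p) = M"

definition load :: "'e list set \<Rightarrow> ('e list \<Rightarrow> real) \<Rightarrow> 'e \<Rightarrow> real" where
  "load P f e = (\<Sum>p\<in>{p\<in>P. e \<in> set p}. f p)"

definition path_cost :: "('e \<Rightarrow> real \<Rightarrow> real) \<Rightarrow> 'e list set \<Rightarrow> ('e list \<Rightarrow> real) \<Rightarrow> 'e list \<Rightarrow> real" where
  "path_cost c P f p = (\<Sum>e\<in>set p. c e (load P f e))"

definition wardrop :: "('e \<Rightarrow> real \<Rightarrow> real) \<Rightarrow> 'e list set \<Rightarrow> real \<Rightarrow> ('e list \<Rightarrow> real) \<Rightarrow> bool" where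
  "wardrop c P M f \<longleftrightarrow> feasible P M f \<and>
     (\<forall>p\<in>P. \<forall>p'\<in>P. f p > 0 \<longrightarrow> path_cost c P f p \<le> path_cost c P f p')"

definition social_cost :: "('e::finite \<Rightarrow> real \<Rightarrow> real) \<Rightarrow> ('e \<Rightarrow> real) \<Rightarrow> real" where
  "social_cost c x = (\<Sum>e\<in>UNIV. x e * c e (x e))"

definition Opt :: "('e::finite \<Rightarrow> real \<Rightarrow> real) \<Rightarrow> 'e list set \<Rightarrow> real \<Rightarrow> real" where
  "Opt c P M = Inf {social_cost c (load P f) | f. feasible P M f}"

definition PoA :: "('e::finite \<Rightarrow> real \<Rightarrow> real) \<Rightarrow> 'e list set \<Rightarrow> real \<Rightarrow> ('e list \<Rightarrow> real) \<Rightarrow> real" where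
  "PoA c P M f = (if Opt c P M > 0 then social_cost c (load P f) / Opt c P M else 1)"

end

theory Submission
  imports Defs
begin


lemma ev_neg:
  fixes b :: "nat \<Rightarrow> real"
  assumes "b d < 0"
  shows "\<exists>X\<ge>1. \<forall>x\<ge>X. (\<Sum>j\<le>d. b j * x^j) \<le> 0"
proof (cases d)
  case 0 then show ?thesis using assms by (intro exI[of _ 1]) simp
next
  case (Suc m)
  define S where "S = (\<Sum>j<d. \<bar>b j\<bar>)"
  define X where "X = max 1 (S / (- b d))"
  have "\<forall>x\<ge>X. (\<Sum>j\<le>d. b j * x^j) \<le> 0"
  proof (intro allI impI)
    fix x :: real assume "X \<le> x"
    hence x1: "1 \<le> x" and "S / (- b d) \<le> x" by (auto simp: X_def)
    have "S \<le> x * (- b d)" using \<open>S / (- b d) \<le> x\<close> assms by (metis pos_divide_le_eq neg_0_less_iff_less)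
    hence xS: "S \<le> - b d * x" by (simp add: mult.commute)
    have "(\<Sum>j<d. b j * x^j) \<le> (\<Sum>j<d. \<bar>b j\<bar> * x^m)"
    proof (rule sum_mono)
      fix j assume "j \<in> {..<d}"
      hence "j \<le> m" using Suc by auto
      hence "x^j \<le> x^m" using x1 by (simp add: power_increasing)
      moreover have "b j * x^j \<le> \<bar>b j\<bar> * x^j" using x1 by (intro mult_right_mono) auto
      ultimately show "b j * x^j \<le> \<bar>b j\<bar> * x^m"
        by (meson abs_ge_zero mult_left_mono order_trans)
    qed
    also have "\<dots> = S * x^m" by (simp add: S_def sum_distrib_right)
    also have "\<dots> \<le> - b d * x * x^m" using xS x1 by (intro mult_right_mono) auto
    finally have "(\<Sum>j<d. b j * x^j) + b d * x^d \<le> 0" using Suc by (simp add: algebra_simps)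
    moreover have "(\<Sum>j\<le>d. b j * x^j) = (\<Sum>j<d. b j * x^j) + b d * x^d"
      by (simp add: lessThan_Suc_atMost[symmetric])
    ultimately show "(\<Sum>j\<le>d. b j * x^j) \<le> 0" by simp
  qed
  then show ?thesis by (intro exI[of _ X]) (auto simp: X_def)
qed

lemma bdd_neg:
  fixes b :: "nat \<Rightarrow> real"
  assumes "b d < 0"
  shows "\<exists>K\<ge>0. \<forall>x\<ge>0. x * (\<Sum>j\<le>d. b j * x^j) \<le> K"
proof -
  obtain X where X1: "X \<ge> 1" and XX: "\<forall>x\<ge>X. (\<Sum>j\<le>d. b j * x^j) \<le> 0"
    using ev_neg[of b d, OF assms] by blast
  define K where "K = X * (\<Sum>j\<le>d. \<bar>b j\<bar> * X^j)"
  have K0: "K \<ge> 0" unfolding K_def using X1 by (intro mult_nonneg_nonneg sum_nonneg) auto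
  have "\<forall>x\<ge>0. x * (\<Sum>j\<le>d. b j * x^j) \<le> K"
  proof (intro allI impI)
    fix x :: real assume x0: "0 \<le> x"
    show "x * (\<Sum>j\<le>d. b j * x^j) \<le> K"
    proof (cases "x \<ge> X")
      case True
      then show ?thesis using XX x0 K0 by (meson mult_nonneg_nonpos order_trans)
    next
      case False
      have s: "(\<Sum>j\<le>d. b j * x^j) \<le> (\<Sum>j\<le>d. \<bar>b j\<bar> * X^j)"
      proof (rule sum_mono)
        fix j assume "j \<in> {..d}"
        have "b j * x^j \<le> \<bar>b j\<bar> * x^j" using x0 by (intro mult_right_mono) auto
        also have "\<dots> \<le> \<bar>b j\<bar> * X^j" using x0 False by (intro mult_left_mono power_mono) auto
        finally show "b j * x^j \<le> \<bar>b j\<bar> * X^j" .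
      qed
      have T0: "(\<Sum>j\<le>d. \<bar>b j\<bar> * X^j) \<ge> 0" using X1 by (intro sum_nonneg) auto
      have "x * (\<Sum>j\<le>d. b j * x^j) \<le> x * (\<Sum>j\<le>d. \<bar>b j\<bar> * X^j)" using s x0 by (rule mult_left_mono)
      also have "\<dots> \<le> K" unfolding K_def using False T0 by (intro mult_right_mono) auto
      finally show ?thesis .
    qed
  qed
  then show ?thesis using K0 by blast
qed

lemma low_bound:
  fixes b :: "nat \<Rightarrow> real"
  assumes "\<forall>j\<le>d. j \<ge> D \<longrightarrow> b j = 0" and x0: "x \<ge> 0"
  shows "x * (\<Sum>j\<le>d. b j * x^j) \<le> (\<Sum>j\<le>d. \<bar>b j\<bar>) * (1 + x^D)"
proof -
  have "x * (\<Sum>j\<le>d. b j * x^j) = (\<Sum>j\<le>d. b j * x^Suc j)"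
    by (simp add: sum_distrib_left algebra_simps)
  also have "\<dots> \<le> (\<Sum>j\<le>d. \<bar>b j\<bar> * (1 + x^D))"
  proof (rule sum_mono)
    fix j assume j: "j \<in> {..d}"
    show "b j * x^Suc j \<le> \<bar>b j\<bar> * (1 + x^D)"
    proof (cases "j \<ge> D")
      case True then show ?thesis using assms(1) j x0 by auto
    next
      case False
      have "x^Suc j \<le> 1 + x^D"
      proof (cases "x \<le> 1")
        case True
        then have "x^Suc j \<le> 1" by (rule power_le_one[OF x0])
        then show ?thesis using x0 by (smt (verit) zero_le_power)
      next
        case False2: False
        then have "x^Suc j \<le> x^D" using False by (intro power_increasing) auto
        then show ?thesis by simp
      qed
      moreover have "b j * x^Suc j \<le> \<bar>b j\<bar> * x^Suc j" using x0 by (intro mult_right_mono) auto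
      ultimately show ?thesis by (meson abs_ge_zero mult_left_mono order_trans)
    qed
  qed
  also have "\<dots> = (\<Sum>j\<le>d. \<bar>b j\<bar>) * (1 + x^D)" by (simp add: sum_distrib_right)
  finally show ?thesis .
qed

lemma poly_le_pow:
  fixes q :: "real poly"
  assumes "1 \<le> y" "degree q \<le> D"
  shows "poly q y \<le> (\<Sum>j\<le>degree q. \<bar>coeff q j\<bar>) * y^D"
proof -
  have "poly q y = (\<Sum>j\<le>degree q. coeff q j * y^j)" by (simp add: poly_altdef)
  also have "\<dots> \<le> (\<Sum>j\<le>degree q. \<bar>coeff q j\<bar> * y^D)"
  proof (rule sum_mono)
    fix j assume "j \<in> {..degree q}"
    hence "y^j \<le> y^D" using assms by (intro power_increasing) auto
    moreover have "coeff q j * y^j \<le> \<bar>coeff q j\<bar> * y^j" using assms by (intro mult_right_mono) auto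
    ultimately show "coeff q j * y^j \<le> \<bar>coeff q j\<bar> * y^D" by (meson abs_ge_zero mult_left_mono order_trans)
  qed
  also have "\<dots> = (\<Sum>j\<le>degree q. \<bar>coeff q j\<bar>) * y^D" by (simp add: sum_distrib_right)
  finally show ?thesis .
qed

lemma lead_pos:
  fixes q :: "real poly"
  assumes "q \<noteq> 0" "\<forall>x\<ge>0. poly q x \<ge> 0"
  shows "lead_coeff q > 0"
proof (rule ccontr)
  assume "\<not> lead_coeff q > 0"
  moreover have "lead_coeff q \<noteq> 0" using assms by simp
  ultimately have "lead_coeff q < 0" by linarith
  then have "lead_coeff (-q) > 0" by simp
  then obtain n where n: "\<forall>x\<ge>n. poly (-q) x \<ge> lead_coeff (-q)" using poly_pinfty_gt_lc by blast
  have "poly (-q) (max n 0) > 0" using n \<open>lead_coeff (-q) > 0\<close> by (meson max.cobounded1 order_less_le_trans)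
  moreover have "poly q (max n 0) \<ge> 0" using assms by simp
  ultimately show False by simp
qed

lemma lead_lower:
  fixes q :: "real poly"
  assumes "lead_coeff q > 0"
  shows "\<exists>Y\<ge>1. \<forall>y\<ge>Y. poly q y \<ge> lead_coeff q / 2 * y^(degree q)"
proof -
  define d where "d = degree q"
  define b where "b j = (if j = d then lead_coeff q / 2 - coeff q j else - coeff q j)" for j
  have "b d < 0" using assms by (simp add: b_def d_def)
  then obtain Y where Y: "Y \<ge> 1" "\<forall>y\<ge>Y. (\<Sum>j\<le>d. b j * y^j) \<le> 0" using ev_neg by blast
  have "(\<Sum>j\<le>d. b j * y^j) = lead_coeff q / 2 * y^d - poly q y" for y
  proof -
    have e1: "(\<Sum>j\<le>d. b j * y^j) = (\<Sum>j<d. b j * y^j) + b d * y^d"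
      by (simp add: lessThan_Suc_atMost[symmetric])
    have e2: "poly q y = (\<Sum>j<d. coeff q j * y^j) + coeff q d * y^d"
      by (simp add: poly_altdef d_def lessThan_Suc_atMost[symmetric])
    have e3: "(\<Sum>j<d. b j * y^j) = - (\<Sum>j<d. coeff q j * y^j)"
      by (simp add: b_def sum_negf[symmetric])
    show ?thesis using e1 e2 e3 by (simp add: b_def d_def algebra_simps)
  qed
  then show ?thesis using Y by (intro exI[of _ Y]) (auto simp: d_def)
qed

definition Phi :: "real poly \<Rightarrow> real \<Rightarrow> real" where
  "Phi q x = (\<Sum>j\<le>degree q. coeff q j / real (Suc j) * x^Suc j)"

lemma Phi_deriv: "DERIV (Phi q) x :> poly q x"
  unfolding Phi_def poly_altdef
proof (rule DERIV_sum)
  fix j assume "j \<in> {..degree q}"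
  have "DERIV (\<lambda>x. coeff q j / real (Suc j) * x^Suc j) x :> coeff q j / real (Suc j) * (real (Suc j) * x^(Suc j - Suc 0))"
    by (intro DERIV_cmult DERIV_pow)
  then show "DERIV (\<lambda>x. coeff q j / real (Suc j) * x^Suc j) x :> coeff q j * x^j"
    by (simp del: of_nat_Suc)
qed

lemma Phi_0[simp]: "Phi q 0 = 0" by (simp add: Phi_def)

lemma Phi_convex:
  fixes c :: "real \<Rightarrow> real"
  assumes cq: "\<forall>x\<ge>0. c x = poly q x" and mono: "mono_on {0..} c" and x0: "0 \<le> x" and y0: "0 \<le> y"
  shows "Phi q y - Phi q x \<ge> c x * (y - x)"
proof (cases x y rule: linorder_cases)
  case less
  have ex: "\<exists>z. x < z \<and> z < y \<and> Phi q y - Phi q x = (y - x) * poly q z"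
    using MVT2[OF less Phi_deriv[of q]] .
  then obtain z where z: "x < z" "z < y" "Phi q y - Phi q x = (y - x) * poly q z" by blast
  have "c x \<le> c z" using mono x0 z(1) by (simp add: mono_onD)
  moreover have "c z = poly q z" using cq x0 z(1) by simp
  ultimately have "(y - x) * c x \<le> (y - x) * poly q z" using less by (simp add: mult_left_mono)
  then show ?thesis using z(3) by (simp add: mult.commute)
next
  case equal then show ?thesis by simp
next
  case greater
  have ex: "\<exists>z. y < z \<and> z < x \<and> Phi q x - Phi q y = (x - y) * poly q z"
    using MVT2[OF greater Phi_deriv[of q]] .
  then obtain z where z: "y < z" "z < x" "Phi q x - Phi q y = (x - y) * poly q z" by blast
  have "c z \<le> c x" using mono y0 z by (simp add: mono_onD)
  moreover have "c z = poly q z" using cq y0 z(1) by simp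
  ultimately have "(x - y) * poly q z \<le> (x - y) * c x" using greater by (simp add: mult_left_mono)
  then show ?thesis using z(3) by (simp add: algebra_simps)
qed

lemma Phi_nonneg:
  fixes c :: "real \<Rightarrow> real"
  assumes "\<forall>x\<ge>0. c x = poly q x" "mono_on {0..} c" "\<forall>x\<ge>0. c x \<ge> 0" "0 \<le> y"
  shows "Phi q y \<ge> 0"
proof -
  have "Phi q y - Phi q 0 \<ge> c 0 * (y - 0)" by (rule Phi_convex[OF assms(1,2)]) (use assms in auto)
  moreover have "c 0 * y \<ge> 0" using assms by simp
  ultimately show ?thesis by simp
qed

lemma diff_expand:
  "(real D + 1) * Phi q x - x * poly q x
     = x * (\<Sum>j\<le>degree q. (coeff q j * ((real D + 1) / real (Suc j) - 1)) * x^j)"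
proof -
  have "(real D + 1) * Phi q x = (\<Sum>j\<le>degree q. (real D + 1) * (coeff q j / real (Suc j) * x^Suc j))"
    by (simp add: Phi_def sum_distrib_left)
  moreover have "x * poly q x = (\<Sum>j\<le>degree q. coeff q j * x^Suc j)"
    by (simp add: poly_altdef sum_distrib_left algebra_simps)
  moreover have "x * (\<Sum>j\<le>degree q. (coeff q j * ((real D + 1) / real (Suc j) - 1)) * x^j)
     = (\<Sum>j\<le>degree q. (real D + 1) * (coeff q j / real (Suc j) * x^Suc j) - coeff q j * x^Suc j)"
    by (simp add: sum_distrib_left algebra_simps)
  ultimately show ?thesis by (simp add: sum_subtractf)
qed

lemma boundA:
  fixes q :: "real poly"
  assumes "q \<noteq> 0 \<longrightarrow> lead_coeff q > 0"
  shows "\<exists>K\<ge>0. \<forall>x\<ge>0. (real D + 1) * Phi q x \<le> x * poly q x + K * (1 + x^D)"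
proof (cases "degree q \<le> D")
  case True
  define b where "b j = coeff q j * ((real D + 1) / real (Suc j) - 1)" for j
  have hb: "\<forall>j\<le>degree q. j \<ge> D \<longrightarrow> b j = 0" using True by (auto simp: b_def)
  show ?thesis
  proof (intro exI conjI allI impI)
    show "(\<Sum>j\<le>degree q. \<bar>b j\<bar>) \<ge> 0" by (intro sum_nonneg) auto
    fix x :: real assume "x \<ge> 0"
    from low_bound[OF hb this] diff_expand[of D q x]
    show "(real D + 1) * Phi q x \<le> x * poly q x + (\<Sum>j\<le>degree q. \<bar>b j\<bar>) * (1 + x^D)"
      by (simp add: b_def)
  qed
next
  case False
  then have "q \<noteq> 0" by auto
  with assms have lc: "lead_coeff q > 0" by auto
  define b where "b j = coeff q j * ((real D + 1) / real (Suc j) - 1)" for j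
  have "(real D + 1) / real (Suc (degree q)) < 1" using False by (simp add: divide_less_eq)
  then have "b (degree q) < 0" using lc by (simp add: b_def mult_pos_neg)
  then obtain K where K: "K \<ge> 0" "\<forall>x\<ge>0. x * (\<Sum>j\<le>degree q. b j * x^j) \<le> K" using bdd_neg by blast
  show ?thesis
  proof (intro exI conjI allI impI)
    show "K \<ge> 0" by fact
    fix x :: real assume x: "x \<ge> 0"
    have "K \<le> K * (1 + x^D)" using K x by (simp add: algebra_simps)
    moreover have "x * (\<Sum>j\<le>degree q. b j * x^j) \<le> K" using K x by blast
    ultimately show "(real D + 1) * Phi q x \<le> x * poly q x + K * (1 + x^D)"
      using diff_expand[of D q x] unfolding b_def by linarith
  qed
qed

lemma boundB:
  fixes q :: "real poly"
  assumes "degree q \<le> D"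
  shows "\<exists>K\<ge>0. \<forall>x\<ge>0. x * poly q x \<le> (real D + 1) * Phi q x + K * (1 + x^D)"
proof -
  define b where "b j = - (coeff q j * ((real D + 1) / real (Suc j) - 1))" for j
  have hb: "\<forall>j\<le>degree q. j \<ge> D \<longrightarrow> b j = 0" using assms by (auto simp: b_def)
  show ?thesis
  proof (intro exI conjI allI impI)
    show "(\<Sum>j\<le>degree q. \<bar>b j\<bar>) \<ge> 0" by (intro sum_nonneg) auto
    fix x :: real assume "x \<ge> 0"
    have "x * (\<Sum>j\<le>degree q. b j * x^j) = - ((real D + 1) * Phi q x - x * poly q x)"
      unfolding diff_expand by (simp add: b_def sum_negf)
    with low_bound[OF hb \<open>x \<ge> 0\<close>]
    show "x * poly q x \<le> (real D + 1) * Phi q x + (\<Sum>j\<le>degree q. \<bar>b j\<bar>) * (1 + x^D)"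
      by simp
  qed
qed



lemma load_as_sum: "finite P \<Longrightarrow> load P g e = (\<Sum>p\<in>P. if e \<in> set p then g p else 0)"
  unfolding load_def by (simp add: sum.inter_filter)

lemma sum_swap_load:
  fixes h :: "'e::finite \<Rightarrow> real"
  assumes "finite P"
  shows "(\<Sum>e\<in>UNIV. h e * load P g e) = (\<Sum>p\<in>P. g p * (\<Sum>e\<in>set p. h e))"
proof -
  have "(\<Sum>e\<in>UNIV. h e * load P g e) = (\<Sum>e\<in>UNIV. \<Sum>p\<in>P. if e \<in> set p then h e * g p else 0)"
    using assms by (simp add: load_as_sum sum_distrib_left if_distrib cong: if_cong)
  also have "\<dots> = (\<Sum>p\<in>P. \<Sum>e\<in>UNIV. if e \<in> set p then h e * g p else 0)"
    by (rule sum.swap)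
  also have "\<dots> = (\<Sum>p\<in>P. g p * (\<Sum>e\<in>set p. h e))"
  proof (rule sum.cong)
    fix p assume "p \<in> P"
    have "(\<Sum>e\<in>UNIV. if e \<in> set p then h e * g p else 0) = (\<Sum>e\<in>UNIV \<inter> set p. h e * g p)"
      by (simp only: sum.inter_restrict[OF finite])
    also have "\<dots> = g p * (\<Sum>e\<in>set p. h e)" by (simp add: sum_distrib_left mult.commute)
    finally show "(\<Sum>e\<in>UNIV. if e \<in> set p then h e * g p else 0) = g p * (\<Sum>e\<in>set p. h e)" .
  qed simp
  finally show ?thesis .
qed

lemma social_eq:
  fixes c :: "'e::finite \<Rightarrow> real \<Rightarrow> real"
  assumes "finite P"
  shows "social_cost c (load P f) = (\<Sum>p\<in>P. f p * path_cost c P f p)"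
  unfolding social_cost_def path_cost_def
  using sum_swap_load[OF assms, of "\<lambda>e. c e (load P f e)" f] by (simp add: mult.commute)

lemma load_nonneg: "feasible P M f \<Longrightarrow> 0 \<le> load P f e"
  unfolding load_def feasible_def by (intro sum_nonneg) auto

lemma load_le_M: "finite P \<Longrightarrow> feasible P M f \<Longrightarrow> load P f e \<le> M"
proof -
  assume P: "finite P" and f: "feasible P M f"
  have "load P f e \<le> sum f P" unfolding load_def
    by (rule sum_mono2) (use P f in \<open>auto simp: feasible_def\<close>)
  then show ?thesis using f by (simp add: feasible_def)
qed

lemma load_ge: "finite P \<Longrightarrow> feasible P M f \<Longrightarrow> p \<in> P \<Longrightarrow> e \<in> set p \<Longrightarrow> f p \<le> load P f e"
  unfolding load_def feasible_def
  by (intro member_le_sum) auto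

lemma load_pos_path:
  assumes "finite P" "feasible P M f" "load P f e > 0"
  shows "\<exists>p\<in>P. e \<in> set p \<and> f p > 0"
proof (rule ccontr)
  assume "\<not> ?thesis"
  then have "\<forall>p\<in>{p\<in>P. e \<in> set p}. f p = 0" using assms(2) unfolding feasible_def by force
  then have "load P f e = 0" unfolding load_def by simp
  then show False using assms(3) by simp
qed

lemma potential_min:
  fixes c :: "'e::finite \<Rightarrow> real \<Rightarrow> real"
  assumes P: "finite P" "P \<noteq> {}"
    and w: "wardrop c P M f" and g: "feasible P M g"
    and q: "\<forall>e. \<forall>x\<ge>0. c e x = poly (q e) x" and mono: "\<forall>e. mono_on {0..} (c e)"
  shows "(\<Sum>e\<in>UNIV. Phi (q e) (load P f e)) \<le> (\<Sum>e\<in>UNIV. Phi (q e) (load P g e))"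
proof -
  have f: "feasible P M f" using w by (simp add: wardrop_def)
  define m where "m = Min (path_cost c P f ` P)"
  have m_le: "m \<le> path_cost c P f p" if "p \<in> P" for p using P that by (simp add: m_def)
  have m_in: "m \<in> path_cost c P f ` P" using P by (simp add: m_def)
  have fle: "f p * path_cost c P f p \<le> f p * m" if "p \<in> P" for p
  proof (cases "f p > 0")
    case True
    from m_in obtain p' where "p' \<in> P" "m = path_cost c P f p'" by auto
    then have "path_cost c P f p \<le> m" using w True that unfolding wardrop_def by blast
    then show ?thesis using True by (simp add: mult_left_mono)
  next
    case False
    have "f p \<ge> 0" using f that by (simp add: feasible_def)
    then have "f p = 0" using False by linarith
    then show ?thesis by simp
  qed
  have gge: "g p * m \<le> g p * path_cost c P f p" if "p \<in> P" for p
  proof -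
    have "g p \<ge> 0" using g that by (simp add: feasible_def)
    then show ?thesis using m_le[OF that] by (simp add: mult_left_mono)
  qed
  have "(\<Sum>p\<in>P. f p * path_cost c P f p) \<le> (\<Sum>p\<in>P. f p * m)" by (rule sum_mono) (rule fle)
  also have "\<dots> = M * m" using f by (simp add: feasible_def sum_distrib_right[symmetric])
  also have "\<dots> = (\<Sum>p\<in>P. g p * m)" using g by (simp add: feasible_def sum_distrib_right[symmetric])
  also have "\<dots> \<le> (\<Sum>p\<in>P. g p * path_cost c P f p)" by (rule sum_mono) (rule gge)
  finally have key: "(\<Sum>p\<in>P. f p * path_cost c P f p) \<le> (\<Sum>p\<in>P. g p * path_cost c P f p)" .
  have sf: "(\<Sum>e\<in>UNIV. c e (load P f e) * load P f e) = (\<Sum>p\<in>P. f p * path_cost c P f p)"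
    using sum_swap_load[OF P(1), of "\<lambda>e. c e (load P f e)" f] by (simp add: path_cost_def)
  have sg: "(\<Sum>e\<in>UNIV. c e (load P f e) * load P g e) = (\<Sum>p\<in>P. g p * path_cost c P f p)"
    using sum_swap_load[OF P(1), of "\<lambda>e. c e (load P f e)" g] by (simp add: path_cost_def)
  have "(\<Sum>e\<in>UNIV. c e (load P f e) * (load P g e - load P f e))
        \<le> (\<Sum>e\<in>UNIV. Phi (q e) (load P g e) - Phi (q e) (load P f e))"
    by (rule sum_mono, rule Phi_convex) (simp_all add: q mono load_nonneg[OF f] load_nonneg[OF g])
  moreover have "(\<Sum>e\<in>UNIV. c e (load P f e) * (load P g e - load P f e)) \<ge> 0"
    using key sf sg by (simp add: right_diff_distrib sum_subtractf)
  ultimately show ?thesis by (simp add: sum_subtractf)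
qed



lemma social_nonneg:
  fixes c :: "'e::finite \<Rightarrow> real \<Rightarrow> real"
  assumes "\<forall>e. \<forall>x\<ge>0. c e x \<ge> 0" "feasible P M f"
  shows "social_cost c (load P f) \<ge> 0"
  unfolding social_cost_def using assms load_nonneg[OF assms(2)]
  by (intro sum_nonneg mult_nonneg_nonneg) auto

lemma feasible_uniform:
  assumes "finite P" "P \<noteq> {}" "M \<ge> 0"
  shows "feasible P M (\<lambda>p. M / real (card P))"
  using assms by (simp add: feasible_def card_gt_0_iff)

lemma Opt_le:
  fixes c :: "'e::finite \<Rightarrow> real \<Rightarrow> real"
  assumes "\<forall>e. \<forall>x\<ge>0. c e x \<ge> 0" "feasible P M f"
  shows "Opt c P M \<le> social_cost c (load P f)"
  unfolding Opt_def
proof (rule cInf_lower)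
  show "social_cost c (load P f) \<in> {social_cost c (load P f) |f. feasible P M f}" using assms by blast
  show "bdd_below {social_cost c (load P f) |f. feasible P M f}"
    by (rule bdd_belowI[of _ 0]) (use social_nonneg[OF assms(1)] in blast)
qed

lemma Opt_ge:
  fixes c :: "'e::finite \<Rightarrow> real \<Rightarrow> real"
  assumes "finite P" "P \<noteq> {}" "M \<ge> 0" "\<And>f. feasible P M f \<Longrightarrow> z \<le> social_cost c (load P f)"
  shows "z \<le> Opt c P M"
  unfolding Opt_def
proof (rule cInf_greatest)
  show "{social_cost c (load P f) |f. feasible P M f} \<noteq> {}" using feasible_uniform[OF assms(1-3)] by blast
qed (use assms(4) in blast)

lemma Opt_near:
  fixes c :: "'e::finite \<Rightarrow> real \<Rightarrow> real"
  assumes "finite P" "P \<noteq> {}" "M \<ge> 0" "\<forall>e. \<forall>x\<ge>0. c e x \<ge> 0"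
  shows "\<exists>g. feasible P M g \<and> social_cost c (load P g) < Opt c P M + 1"
proof -
  let ?S = "{social_cost c (load P f) |f. feasible P M f}"
  have ne: "?S \<noteq> {}" using feasible_uniform[OF assms(1-3)] by blast
  have bdd: "bdd_below ?S"
    by (rule bdd_belowI[of _ 0]) (use social_nonneg[OF assms(4)] in blast)
  have "Inf ?S < Opt c P M + 1" by (simp add: Opt_def)
  then obtain s where "s \<in> ?S" "s < Opt c P M + 1" using cInf_less_iff[OF ne bdd] by blast
  then show ?thesis by blast
qed

lemma case_zero_path:
  fixes c :: "'e::finite \<Rightarrow> real \<Rightarrow> real"
  assumes P: "finite P" "P \<noteq> {}"
    and q: "\<forall>e. \<forall>x\<ge>0. c e x = poly (q e) x"
    and cnn: "\<forall>e. \<forall>x\<ge>0. c e x \<ge> 0"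
    and W: "\<forall>M>0. wardrop c P M (feq M)"
    and p0: "p0 \<in> P" "\<forall>e\<in>set p0. q e = 0"
  shows "((\<lambda>M. PoA c P M (feq M)) \<longlongrightarrow> 1) at_top"
proof (rule tendsto_eventually)
  have "PoA c P M (feq M) = 1" if M: "M > 0" for M
  proof -
    have w: "wardrop c P M (feq M)" using W M by blast
    then have f: "feasible P M (feq M)" by (simp add: wardrop_def)
    have c0: "path_cost c P (feq M) p0 = 0"
      unfolding path_cost_def using p0 q load_nonneg[OF f] by (intro sum.neutral) auto
    have hz: "feq M p * path_cost c P (feq M) p = 0" if p: "p \<in> P" for p
    proof (cases "feq M p > 0")
      case True
      then have "path_cost c P (feq M) p \<le> 0" using w p p0(1) c0 unfolding wardrop_def by metis
      moreover have "path_cost c P (feq M) p \<ge> 0"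
        unfolding path_cost_def using cnn load_nonneg[OF f] by (intro sum_nonneg) auto
      ultimately show ?thesis by simp
    next
      case False
      have "feq M p \<ge> 0" using f p by (simp add: feasible_def)
      then have "feq M p = 0" using False by linarith
      then show ?thesis by simp
    qed
    have "social_cost c (load P (feq M)) = (\<Sum>p\<in>P. feq M p * path_cost c P (feq M) p)"
      by (rule social_eq[OF P(1)])
    also have "\<dots> = 0" by (rule sum.neutral) (use hz in blast)
    finally have "social_cost c (load P (feq M)) = 0" .
    then have "Opt c P M \<le> 0" using Opt_le[OF cnn f] by simp
    then show ?thesis by (simp add: PoA_def)
  qed
  then show "\<forall>\<^sub>F M in at_top. PoA c P M (feq M) = 1"
    unfolding eventually_at_top_linorder by (intro exI[of _ 1]) auto
qed

lemma case_main:
  fixes c :: "'e::finite \<Rightarrow> real \<Rightarrow> real"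
  assumes P: "finite P" "P \<noteq> {}"
    and q: "\<forall>e. \<forall>x\<ge>0. c e x = poly (q e) x"
    and mono: "\<forall>e. mono_on {0..} (c e)"
    and cnn: "\<forall>e. \<forall>x\<ge>0. c e x \<ge> 0"
    and W: "\<forall>M>0. wardrop c P M (feq M)"
    and nz: "\<forall>p\<in>P. \<exists>e\<in>set p. q e \<noteq> 0"
  shows "((\<lambda>M. PoA c P M (feq M)) \<longlongrightarrow> 1) at_top"
proof -
  have feasW: "feasible P M (feq M)" if "M > 0" for M using W that by (simp add: wardrop_def)
  define D where "D = (LEAST n. \<exists>p\<in>P. \<forall>e\<in>set p. degree (q e) \<le> n)"
  have exn: "\<exists>p\<in>P. \<forall>e\<in>set p. degree (q e) \<le> (\<Sum>e\<in>UNIV. degree (q e))"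
  proof -
    obtain p where "p \<in> P" using P(2) by blast
    moreover have "degree (q e) \<le> (\<Sum>e\<in>UNIV. degree (q e))" for e
      by (rule member_le_sum) auto
    ultimately show ?thesis by blast
  qed
  have "\<exists>p\<in>P. \<forall>e\<in>set p. degree (q e) \<le> D"
    unfolding D_def by (rule LeastI_ex) (use exn in blast)
  then obtain p0 where p0: "p0 \<in> P" "\<forall>e\<in>set p0. degree (q e) \<le> D" by blast
  have Dmin: "\<exists>e\<in>set p. q e \<noteq> 0 \<and> D \<le> degree (q e)" if p: "p \<in> P" for p
  proof (rule ccontr)
    assume nq: "\<not> ?thesis"
    obtain e0 where e0: "e0 \<in> set p" "q e0 \<noteq> 0" using nz p by blast
    then have Dpos: "D > 0" using nq by auto
    have h: "\<forall>e\<in>set p. degree (q e) \<le> D - 1"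
    proof
      fix e assume e: "e \<in> set p"
      show "degree (q e) \<le> D - 1"
      proof (cases "q e = 0")
        case True then show ?thesis by simp
      next
        case False then show ?thesis using nq e by auto
      qed
    qed
    have "(LEAST n. \<exists>p\<in>P. \<forall>e\<in>set p. degree (q e) \<le> n) \<le> D - 1"
      by (rule Least_le) (use p h in blast)
    then have "D \<le> D - 1" by (simp add: D_def)
    then show False using Dpos by simp
  qed
  have lc: "lead_coeff (q e) > 0" if "q e \<noteq> 0" for e
    using lead_pos[OF that] q cnn by metis
  define lm where "lm = Min (insert 1 ((\<lambda>e. lead_coeff (q e)) ` {e. q e \<noteq> 0}))"
  have lm_pos: "lm > 0" unfolding lm_def using lc by (auto simp: Min_gr_iff)
  have lm_le: "lm \<le> lead_coeff (q e)" if "q e \<noteq> 0" for e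
    unfolding lm_def using that by (intro Min_le) auto
  have "\<forall>e. \<exists>Y\<ge>1. q e \<noteq> 0 \<longrightarrow> (\<forall>y\<ge>Y. poly (q e) y \<ge> lead_coeff (q e) / 2 * y^degree (q e))"
  proof
    fix e show "\<exists>Y\<ge>1. q e \<noteq> 0 \<longrightarrow> (\<forall>y\<ge>Y. poly (q e) y \<ge> lead_coeff (q e) / 2 * y^degree (q e))"
    proof (cases "q e = 0")
      case True then show ?thesis by (intro exI[of _ 1]) simp
    next
      case False then show ?thesis using lead_lower[OF lc[OF False]] by blast
    qed
  qed
  then obtain Yf where Yf: "\<forall>e. Yf e \<ge> 1 \<and> (q e \<noteq> 0 \<longrightarrow> (\<forall>y\<ge>Yf e. poly (q e) y \<ge> lead_coeff (q e) / 2 * y^degree (q e)))"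
    by metis
  define Y0 where "Y0 = (\<Sum>e\<in>UNIV. Yf e)"
  have Yf_le: "Yf e \<le> Y0" for e unfolding Y0_def by (rule member_le_sum) (use Yf in \<open>auto intro: order_trans[OF zero_le_one]\<close>)
  have Y0_1: "Y0 \<ge> 1" using Yf_le Yf order_trans by blast
  have lowc: "c e y \<ge> lm / 2 * y^k" if "q e \<noteq> 0" "k \<le> degree (q e)" "y \<ge> Y0" for e y k
  proof -
    have y1: "y \<ge> 1" using that Y0_1 by linarith
    have "poly (q e) y \<ge> lead_coeff (q e) / 2 * y^degree (q e)" using Yf Yf_le[of e] that by force
    moreover have "lm / 2 * y^degree (q e) \<le> lead_coeff (q e) / 2 * y^degree (q e)"
      using lm_le[OF that(1)] y1 by (intro mult_right_mono) auto
    moreover have "lm / 2 * y^k \<le> lm / 2 * y^degree (q e)"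
      using lm_pos y1 that(2) by (intro mult_left_mono power_increasing) auto
    moreover have "c e y = poly (q e) y" using q y1 by simp
    ultimately show ?thesis by linarith
  qed
  have "\<forall>e. \<exists>K\<ge>0. \<forall>x\<ge>0. (real D + 1) * Phi (q e) x \<le> x * poly (q e) x + K * (1 + x^D)"
    using boundA lc by blast
  then obtain KAf where KAf: "\<forall>e. KAf e \<ge> 0 \<and> (\<forall>x\<ge>0. (real D + 1) * Phi (q e) x \<le> x * poly (q e) x + KAf e * (1 + x^D))"
    by metis
  define KA where "KA = (\<Sum>e\<in>UNIV. KAf e)"
  have KA0: "KA \<ge> 0" unfolding KA_def using KAf by (intro sum_nonneg) auto
  have KA: "(real D + 1) * Phi (q e) x \<le> x * c e x + KA * (1 + x^D)" if "x \<ge> 0" for e x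
  proof -
    have "KAf e \<le> KA" unfolding KA_def by (rule member_le_sum) (use KAf in auto)
    then have "KAf e * (1 + x^D) \<le> KA * (1 + x^D)" using that by (intro mult_right_mono) auto
    moreover have "x * c e x = x * poly (q e) x" using q that by simp
    moreover have "(real D + 1) * Phi (q e) x \<le> x * poly (q e) x + KAf e * (1 + x^D)" using KAf that by blast
    ultimately show ?thesis by linarith
  qed
  have "\<forall>e. \<exists>K\<ge>0. degree (q e) \<le> D \<longrightarrow> (\<forall>x\<ge>0. x * poly (q e) x \<le> (real D + 1) * Phi (q e) x + K * (1 + x^D))"
  proof
    fix e show "\<exists>K\<ge>0. degree (q e) \<le> D \<longrightarrow> (\<forall>x\<ge>0. x * poly (q e) x \<le> (real D + 1) * Phi (q e) x + K * (1 + x^D))"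
    proof (cases "degree (q e) \<le> D")
      case True then show ?thesis using boundB[OF True] by blast
    next
      case False then show ?thesis by (intro exI[of _ 0]) simp
    qed
  qed
  then obtain KBf where KBf: "\<forall>e. KBf e \<ge> 0 \<and> (degree (q e) \<le> D \<longrightarrow> (\<forall>x\<ge>0. x * poly (q e) x \<le> (real D + 1) * Phi (q e) x + KBf e * (1 + x^D)))"
    by metis
  define KB where "KB = (\<Sum>e\<in>UNIV. KBf e)"
  have KB0: "KB \<ge> 0" unfolding KB_def using KBf by (intro sum_nonneg) auto
  have KB: "x * c e x \<le> (real D + 1) * Phi (q e) x + KB * (1 + x^D)" if "x \<ge> 0" "degree (q e) \<le> D" for e x
  proof -
    have "KBf e \<le> KB" unfolding KB_def by (rule member_le_sum) (use KBf in auto)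
    then have "KBf e * (1 + x^D) \<le> KB * (1 + x^D)" using that by (intro mult_right_mono) auto
    moreover have "x * c e x = x * poly (q e) x" using q that by simp
    moreover have "x * poly (q e) x \<le> (real D + 1) * Phi (q e) x + KBf e * (1 + x^D)" using KBf that by blast
    ultimately show ?thesis by linarith
  qed
  define B where "B = (\<Sum>e\<in>set p0. \<Sum>j\<le>degree (q e). \<bar>coeff (q e) j\<bar>)"
  have B0: "B \<ge> 0" unfolding B_def by (intro sum_nonneg) auto
  have costp0: "path_cost c P (feq M) p0 \<le> B * M^D" if M: "M \<ge> 1" for M
  proof -
    have f: "feasible P M (feq M)" using feasW M by simp
    have "path_cost c P (feq M) p0 \<le> (\<Sum>e\<in>set p0. (\<Sum>j\<le>degree (q e). \<bar>coeff (q e) j\<bar>) * M^D)"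
      unfolding path_cost_def
    proof (rule sum_mono)
      fix e assume e: "e \<in> set p0"
      have "c e (load P (feq M) e) \<le> c e M"
        by (rule mono_onD[OF mono[rule_format]]) (use load_nonneg[OF f] load_le_M[OF P(1) f] M in auto)
      also have "\<dots> = poly (q e) M" using q M by simp
      also have "\<dots> \<le> (\<Sum>j\<le>degree (q e). \<bar>coeff (q e) j\<bar>) * M^D"
        by (rule poly_le_pow[OF M]) (use p0 e in blast)
      finally show "c e (load P (feq M) e) \<le> (\<Sum>j\<le>degree (q e). \<bar>coeff (q e) j\<bar>) * M^D" .
    qed
    also have "\<dots> = B * M^D" unfolding B_def by (simp add: sum_distrib_right)
    finally show ?thesis .
  qed
  have costbound: "c e (load P (feq M) e) \<le> B * M^D" if M: "M \<ge> 1" and pos: "load P (feq M) e > 0" for M e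
  proof -
    have w: "wardrop c P M (feq M)" using W M by simp
    have f: "feasible P M (feq M)" using feasW M by simp
    obtain p where p: "p \<in> P" "e \<in> set p" "feq M p > 0" using load_pos_path[OF P(1) f pos] by blast
    have "c e (load P (feq M) e) \<le> path_cost c P (feq M) p"
      unfolding path_cost_def by (rule member_le_sum) (use p cnn load_nonneg[OF f] in auto)
    also have "\<dots> \<le> path_cost c P (feq M) p0" using w p p0(1) unfolding wardrop_def by blast
    also have "\<dots> \<le> B * M^D" using costp0 M by blast
    finally show ?thesis .
  qed
  define n where "n = real (card (UNIV :: 'e set))"
  have "card (UNIV :: 'e set) > 0" by (simp add: card_gt_0_iff)
  then have n1: "n \<ge> 1" unfolding n_def by linarith
  have "card P > 0" using P by (simp add: card_gt_0_iff)
  then have cP: "real (card P) > 0" by simp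
  define a where "a = lm / 2 / real (card P) ^ Suc D"
  have a0: "a > 0" unfolding a_def using lm_pos cP by (intro divide_pos_pos zero_less_power) auto
  have lower: "social_cost c (load P g) \<ge> a * M^Suc D" if M: "M \<ge> real (card P) * Y0" and g: "feasible P M g" for M g
  proof -
    define y where "y = M / real (card P)"
    have yY: "y \<ge> Y0" unfolding y_def using M cP by (simp add: pos_le_divide_eq mult.commute)
    have y1: "y \<ge> 1" using yY Y0_1 by linarith
    have "\<exists>p\<in>P. g p \<ge> y"
    proof (rule ccontr)
      assume "\<not> ?thesis"
      then have "\<forall>p\<in>P. g p < y" by auto
      then have "sum g P < (\<Sum>p\<in>P. y)" using P by (intro sum_strict_mono) simp_all
      also have "\<dots> = real (card P) * y" by simp
    also have "\<dots> = M" using cP by (simp add: y_def)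
      finally show False using g by (simp add: feasible_def)
    qed
    then obtain p where p: "p \<in> P" "g p \<ge> y" by blast
    obtain e where e: "e \<in> set p" "q e \<noteq> 0" "D \<le> degree (q e)" using Dmin[OF p(1)] by blast
    have xe: "load P g e \<ge> y" using load_ge[OF P(1) g p(1) e(1)] p(2) by linarith
    have "c e y \<le> c e (load P g e)"
      by (rule mono_onD[OF mono[rule_format]]) (use y1 xe in auto)
    moreover have "lm / 2 * y^D \<le> c e y" using lowc[OF e(2) e(3) yY] .
    ultimately have ce: "lm / 2 * y^D \<le> c e (load P g e)" by linarith
    have "y * (lm / 2 * y^D) \<le> load P g e * c e (load P g e)"
      using xe ce y1 lm_pos by (intro mult_mono) auto
    also have "\<dots> \<le> social_cost c (load P g)"
      unfolding social_cost_def by (rule member_le_sum) (use cnn load_nonneg[OF g] in auto)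
    finally have soc: "y * (lm / 2 * y^D) \<le> social_cost c (load P g)" .
    have "a * M^Suc D = lm / 2 * (M^Suc D / real (card P)^Suc D)" by (simp add: a_def)
    also have "\<dots> = lm / 2 * y^Suc D" by (simp add: y_def power_divide)
    also have "\<dots> = y * (lm / 2 * y^D)" by (simp add: power_Suc ac_simps)
    also have "\<dots> \<le> social_cost c (load P g)" by (rule soc)
    finally show ?thesis .
  qed
  have high: "load P (feq M) e * c e (load P (feq M) e) \<le> \<delta> * M^Suc D"
    if dpos: "\<delta> > 0"
      and M: "M \<ge> max 1 (max (Y0 * (B + 1) / \<delta>) (2 * B * (B + 1)^Suc D / (lm * \<delta>^Suc D) + 1))"
      and e: "q e \<noteq> 0" "D < degree (q e)" for \<delta> M e
  proof -
    define B' where "B' = B + 1"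
    have B'pos: "B' > 0" using B0 by (simp add: B'_def)
    have M1: "M \<ge> 1" and MY: "M \<ge> Y0 * B' / \<delta>"
      and MB: "M \<ge> 2 * B * B'^Suc D / (lm * \<delta>^Suc D) + 1" using M by (auto simp: B'_def)
    have f: "feasible P M (feq M)" using feasW M1 by simp
    define x where "x = load P (feq M) e"
    have x0: "x \<ge> 0" unfolding x_def by (rule load_nonneg[OF f])
    have Mpos: "M > 0" using M1 by simp
    have "x * c e x \<le> \<delta> * M^Suc D"
    proof (cases "x > 0")
      case False
      then have "x = 0" using x0 by simp
      then show ?thesis using dpos Mpos by simp
    next
      case True
      have cx: "c e x \<le> B * M^D" unfolding x_def by (rule costbound[OF M1 True[unfolded x_def]])
      show ?thesis
      proof (cases "x \<le> \<delta> * M / B'")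
        case True2: True
        have "x * c e x \<le> x * (B * M^D)" using cx x0 by (rule mult_left_mono)
        also have "\<dots> \<le> (\<delta> * M / B') * (B * M^D)" using True2 B0 Mpos by (intro mult_right_mono) auto
        also have "\<dots> = (\<delta> * M^Suc D) * (B / B')" by simp
        also have "\<dots> \<le> \<delta> * M^Suc D"
        proof (rule mult_left_le)
          show "B / B' \<le> 1" using B'pos by (simp add: B'_def)
          show "0 \<le> \<delta> * M^Suc D" using dpos Mpos by simp
        qed
        finally show ?thesis .
      next
        case False2: False
        have "\<delta> * (Y0 * B' / \<delta>) / B' \<le> \<delta> * M / B'"
          using MY dpos B'pos by (intro divide_right_mono mult_left_mono) auto
        moreover have "\<delta> * (Y0 * B' / \<delta>) / B' = Y0" using dpos B'pos by simp
        ultimately have xY: "x \<ge> Y0" using False2 by linarith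
        have "lm / 2 * x^Suc D \<le> c e x" using lowc[OF e(1) _ xY, of "Suc D"] e(2) by linarith
        then have A1: "lm / 2 * x^Suc D \<le> B * M^D" using cx by linarith
        have "(\<delta> * M / B')^Suc D \<le> x^Suc D"
          using False2 dpos Mpos B'pos by (intro power_mono) auto
        then have "lm / 2 * (\<delta> * M / B')^Suc D \<le> lm / 2 * x^Suc D"
          using lm_pos by (intro mult_left_mono) auto
        with A1 have A2: "lm / 2 * (\<delta> * M / B')^Suc D \<le> B * M^D" by linarith
        have eqp: "(\<delta> * M / B')^Suc D = \<delta>^Suc D * (M * M^D) / B'^Suc D"
          using B'pos by (simp add: power_divide power_mult_distrib field_simps)
        from A2[unfolded eqp] have "lm / 2 * (\<delta>^Suc D * (M * M^D) / B'^Suc D) \<le> B * M^D" .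
        then have "lm * \<delta>^Suc D * M * M^D \<le> 2 * B * B'^Suc D * M^D"
          using B'pos by (simp add: field_simps)
        then have "(lm * \<delta>^Suc D * M) * M^D \<le> (2 * B * B'^Suc D) * M^D" by (simp add: ac_simps)
        then have "lm * \<delta>^Suc D * M \<le> 2 * B * B'^Suc D" using Mpos by simp
        then have "M \<le> 2 * B * B'^Suc D / (lm * \<delta>^Suc D)"
          using lm_pos dpos by (simp add: pos_le_divide_eq mult.commute)
        then show ?thesis using MB by linarith
      qed
    qed
    then show ?thesis by (simp add: x_def)
  qed
  show ?thesis
  proof (rule tendstoI)
    fix \<epsilon> :: real assume eps: "\<epsilon> > 0"
    define \<epsilon>' where "\<epsilon>' = \<epsilon> / 2"
    have e'pos: "\<epsilon>' > 0" using eps by (simp add: \<epsilon>'_def)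
    define \<delta> where "\<delta> = \<epsilon>' * a / (2 * n)"
    have dpos: "\<delta> > 0" unfolding \<delta>_def using e'pos a0 n1 by simp
    have nd: "n * \<delta> = \<epsilon>' * a / 2" unfolding \<delta>_def using n1 by simp
    define K' where "K' = n * (KA + KB)"
    have K'0: "K' \<ge> 0" unfolding K'_def using n1 KA0 KB0 by simp
    define M2 where "M2 = max (max 1 (max (Y0 * (B + 1) / \<delta>) (2 * B * (B + 1)^Suc D / (lm * \<delta>^Suc D) + 1)))
       (max (real (card P) * Y0) (2 * (1 + 2 * K') / (\<epsilon>' * a)))"
    have main: "dist (PoA c P M (feq M)) 1 < \<epsilon>" if M: "M \<ge> M2" for M
    proof -
      have MH: "M \<ge> max 1 (max (Y0 * (B + 1) / \<delta>) (2 * B * (B + 1)^Suc D / (lm * \<delta>^Suc D) + 1))"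
        using M unfolding M2_def by linarith
      have M1: "M \<ge> 1" using MH by linarith
      have MP: "M \<ge> real (card P) * Y0" using M unfolding M2_def by linarith
      have MK: "M \<ge> 2 * (1 + 2 * K') / (\<epsilon>' * a)" using M unfolding M2_def by linarith
      have Mpos: "M > 0" using M1 by simp
      have w: "wardrop c P M (feq M)" using W Mpos by simp
      have f: "feasible P M (feq M)" using feasW Mpos by simp
      obtain g where g: "feasible P M g" "social_cost c (load P g) < Opt c P M + 1"
        using Opt_near[OF P _ cnn, of M] Mpos by auto
      have Optlow: "a * M^Suc D \<le> Opt c P M"
        by (rule Opt_ge[OF P]) (use Mpos lower MP in auto)
      have Opos: "Opt c P M > 0" using Optlow a0 Mpos by (smt (verit) zero_less_power mult_pos_pos)
      have OptEq: "Opt c P M \<le> social_cost c (load P (feq M))" by (rule Opt_le[OF cnn f])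
      define x where "x = load P (feq M)"
      define y where "y = load P g"
      have MD: "z^D \<le> M^D" if "0 \<le> z" "z \<le> M" for z using that by (intro power_mono) auto
      have MDnn: "0 \<le> M^D" using Mpos by simp
      have S2: "x e * c e (x e) \<le> (real D + 1) * Phi (q e) (x e) + (KB * (1 + M^D) + \<delta> * M^Suc D)" for e
      proof -
        have x0: "x e \<ge> 0" and xM: "x e \<le> M"
          unfolding x_def using load_nonneg[OF f] load_le_M[OF P(1) f] by auto
        have dMS: "\<delta> * M^Suc D \<ge> 0" using dpos Mpos by simp
        show ?thesis
        proof (cases "degree (q e) \<le> D")
          case True
          have "x e * c e (x e) \<le> (real D + 1) * Phi (q e) (x e) + KB * (1 + x e ^ D)" by (rule KB[OF x0 True])
          moreover have "KB * (1 + x e ^ D) \<le> KB * (1 + M^D)" using KB0 MD[OF x0 xM] by (intro mult_left_mono) auto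
          ultimately show ?thesis using dMS by linarith
        next
          case False
          then have qe: "q e \<noteq> 0" by auto
          have "x e * c e (x e) \<le> \<delta> * M^Suc D" unfolding x_def by (rule high[OF dpos MH qe]) (use False in simp)
          moreover have "Phi (q e) (x e) \<ge> 0"
            by (rule Phi_nonneg[of "c e"]) (use q mono cnn x0 in auto)
          moreover have "KB * (1 + M^D) \<ge> 0" using KB0 MDnn by simp
          ultimately show ?thesis by (smt (verit) mult_nonneg_nonneg of_nat_0_le_iff)
        qed
      qed
      have S5: "(real D + 1) * Phi (q e) (y e) \<le> y e * c e (y e) + KA * (1 + M^D)" for e
      proof -
        have y0: "y e \<ge> 0" and yM: "y e \<le> M"
          unfolding y_def using load_nonneg[OF g(1)] load_le_M[OF P(1) g(1)] by auto
        have "(real D + 1) * Phi (q e) (y e) \<le> y e * c e (y e) + KA * (1 + y e ^ D)" by (rule KA[OF y0])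
        moreover have "KA * (1 + y e ^ D) \<le> KA * (1 + M^D)" using KA0 MD[OF y0 yM] by (intro mult_left_mono) auto
        ultimately show ?thesis by linarith
      qed
      have "social_cost c x \<le> (\<Sum>e\<in>UNIV. (real D + 1) * Phi (q e) (x e) + (KB * (1 + M^D) + \<delta> * M^Suc D))"
        unfolding social_cost_def by (rule sum_mono) (rule S2)
      also have "\<dots> = (real D + 1) * (\<Sum>e\<in>UNIV. Phi (q e) (x e)) + n * (KB * (1 + M^D) + \<delta> * M^Suc D)"
        by (simp add: sum.distrib sum_distrib_left n_def)
      also have "(\<Sum>e\<in>UNIV. Phi (q e) (x e)) \<le> (\<Sum>e\<in>UNIV. Phi (q e) (y e))"
        unfolding x_def y_def by (rule potential_min[OF P w g(1) q mono])
      then have "(real D + 1) * (\<Sum>e\<in>UNIV. Phi (q e) (x e)) \<le> (real D + 1) * (\<Sum>e\<in>UNIV. Phi (q e) (y e))"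
        by (intro mult_left_mono) auto
      then have "(real D + 1) * (\<Sum>e\<in>UNIV. Phi (q e) (x e)) + n * (KB * (1 + M^D) + \<delta> * M^Suc D)
          \<le> (real D + 1) * (\<Sum>e\<in>UNIV. Phi (q e) (y e)) + n * (KB * (1 + M^D) + \<delta> * M^Suc D)" by linarith
      also have "(real D + 1) * (\<Sum>e\<in>UNIV. Phi (q e) (y e)) = (\<Sum>e\<in>UNIV. (real D + 1) * Phi (q e) (y e))"
        by (simp add: sum_distrib_left)
      also have "(\<Sum>e\<in>UNIV. (real D + 1) * Phi (q e) (y e)) \<le> (\<Sum>e\<in>UNIV. y e * c e (y e) + KA * (1 + M^D))"
        by (rule sum_mono) (rule S5)
      also have "(\<Sum>e\<in>UNIV. y e * c e (y e) + KA * (1 + M^D)) = social_cost c y + n * (KA * (1 + M^D))"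
        by (simp add: social_cost_def sum.distrib n_def)
      finally have E1: "social_cost c x \<le> social_cost c y + n * (KA * (1 + M^D)) + n * (KB * (1 + M^D) + \<delta> * M^Suc D)"
        by linarith
      have E2: "n * (KA * (1 + M^D)) + n * (KB * (1 + M^D) + \<delta> * M^Suc D) = K' * (1 + M^D) + (n * \<delta>) * M^Suc D"
        unfolding K'_def by (simp add: algebra_simps)
      have MD1: "M^D \<ge> 1" using M1 by simp
      have S7a: "1 + K' * (1 + M^D) \<le> (1 + 2 * K') * M^D"
      proof -
        have "K' * 1 \<le> K' * M^D" using K'0 MD1 by (intro mult_left_mono) auto
        then show ?thesis using MD1 by (simp add: algebra_simps)
      qed
      have "(1 + 2 * K') \<le> \<epsilon>' * a / 2 * M"
      proof -
        have "2 * (1 + 2 * K') / (\<epsilon>' * a) \<le> M" by (rule MK)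
        then have "2 * (1 + 2 * K') \<le> M * (\<epsilon>' * a)" using e'pos a0 by (simp add: pos_divide_le_eq)
        then show ?thesis by (simp add: algebra_simps)
      qed
      then have "(1 + 2 * K') * M^D \<le> (\<epsilon>' * a / 2 * M) * M^D" using MDnn by (intro mult_right_mono) auto
      also have "\<dots> = \<epsilon>' * a / 2 * M^Suc D" by simp
      finally have S7: "1 + K' * (1 + M^D) \<le> \<epsilon>' * a / 2 * M^Suc D" using S7a by linarith
      have E3: "social_cost c x \<le> social_cost c y + (K' * (1 + M^D) + (n * \<delta>) * M^Suc D)"
        using E1 E2 by linarith
      have E4: "\<epsilon>' * a / 2 * M^Suc D + \<epsilon>' * a / 2 * M^Suc D = \<epsilon>' * (a * M^Suc D)" by (simp add: algebra_simps)
      have Eq: "social_cost c x \<le> Opt c P M + \<epsilon>' * (a * M^Suc D)"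
        using E3[unfolded nd] S7 E4 g(2) unfolding y_def by linarith
      also have "\<dots> \<le> Opt c P M + \<epsilon>' * Opt c P M" using Optlow e'pos by (intro add_left_mono mult_left_mono) auto
      finally have Eq2: "social_cost c x \<le> (1 + \<epsilon>') * Opt c P M" by (simp add: algebra_simps)
      have PoA: "PoA c P M (feq M) = social_cost c x / Opt c P M" using Opos by (simp add: PoA_def x_def)
      have up: "social_cost c x / Opt c P M \<le> 1 + \<epsilon>'" using Eq2 Opos by (simp add: pos_divide_le_eq)
      have lo: "1 \<le> social_cost c x / Opt c P M" using OptEq Opos by (simp add: x_def)
      have "dist (PoA c P M (feq M)) 1 = \<bar>social_cost c x / Opt c P M - 1\<bar>" by (simp add: PoA dist_real_def)
      also have "\<dots> \<le> \<epsilon>'" using up lo by linarith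
      also have "\<dots> < \<epsilon>" using eps by (simp add: \<epsilon>'_def)
      finally show ?thesis .
    qed
    show "\<forall>\<^sub>F M in at_top. dist (PoA c P M (feq M)) 1 < \<epsilon>"
      unfolding eventually_at_top_linorder using main by blast
  qed
qed


theorem corollary4p9:
  fixes src tgt :: "'e::finite \<Rightarrow> 'v" and orig dest :: 'v
    and P :: "'e list set" and c :: "'e \<Rightarrow> real \<Rightarrow> real"
    and feq :: "real \<Rightarrow> 'e list \<Rightarrow> real"
  assumes "finite P" and "P \<noteq> {}"
    and "\<forall>p\<in>P. is_od_path src tgt orig dest p"
    and "\<forall>e. \<exists>q :: real poly. \<forall>x\<ge>0. c e x = poly q x"
    and "\<forall>e. mono_on {0..} (c e)"
    and "\<forall>e. \<forall>x\<ge>0. c e x \<ge> 0"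
    and "\<forall>M>0. wardrop c P M (feq M)"
  shows "((\<lambda>M. PoA c P M (feq M)) \<longlongrightarrow> 1) at_top"
proof -
  have "\<exists>Q. \<forall>e. \<forall>x\<ge>0. c e x = poly (Q e) x" using assms(4) by (rule choice)
  then obtain q where q: "\<forall>e. \<forall>x\<ge>0. c e x = poly (q e) x" by blast
  show ?thesis
  proof (cases "\<exists>p0\<in>P. \<forall>e\<in>set p0. q e = 0")
    case True
    then obtain p0 where p0: "p0 \<in> P" "\<forall>e\<in>set p0. q e = 0" by blast
    show ?thesis by (rule case_zero_path[OF assms(1,2) q assms(6,7) p0])
  next
    case False
    then have nz: "\<forall>p\<in>P. \<exists>e\<in>set p. q e \<noteq> 0" by blast
    show ?thesis by (rule case_main[OF assms(1,2) q assms(5,6,7) nz])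
  qed
qed

end
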